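(* For sufficiently large $n$ and every $i=1,\dots,\ell(n)-1$ we have $2^{\ell(n)-i}<\mathrm{ilog}(i+1,n)$. Moreover, with $n_1=\sqrt{3\log n}+3$ and $n_{i+1}=\sqrt{3\cdot 2^{\ell(n)-i}\log n_i}$, one has $n_i<\sqrt{6(1-2^{-i})}\,\mathrm{ilog}(i,n)$ for every $i=1,\dots,\ell(n)$.
   Context: $\log$ is the natural logarithm. $\mathrm{ilog}(k,n)$ denotes the $k$-fold iterated logarithm of $n$. $\ell(n)$ is defined by: $\ell(n)+3$ is the smallest integer $k$ such that $\mathrm{ilog}(k,n)<0$; $n$ is assumed large enough that $\ell(n)\ge 1$. *)

theory Defs
  imports Complex_Main
begin

fun ilog :: "nat \<Rightarrow> real \<Rightarrow> real" where
  "ilog 0 x = x"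
| "ilog (Suc k) x = ln (ilog k x)"

definition ell :: "nat \<Rightarrow> nat" where
  "ell n = (LEAST k. ilog k (real n) < 0) - 3"

(* the sequence n_i, i >= 1 (index 0 unused):
   n_1 = sqrt(3 log n) + 3,  n_{i+1} = sqrt(3 * 2^(ell n - i) * log n_i) *)
fun nseq :: "nat \<Rightarrow> nat \<Rightarrow> real" where
  "nseq n 0 = 0"
| "nseq n (Suc 0) = sqrt (3 * ln (real n)) + 3"
| "nseq n (Suc (Suc i)) = sqrt (3 * 2 ^ (ell n - Suc i) * ln (nseq n (Suc i)))"

end

theory Submission
  imports Defs
begin

lemma exp1_ge: "(5/2::real) \<le> exp 1"
  using exp_lower_Taylor_quadratic[of 1] by simp

lemma ilog_Suc': "ilog (Suc k) x = ilog k (ln x)"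
  by (induction k) auto

lemma ilog_tower: "x > (exp ^^ j) 3 \<Longrightarrow> ilog j x > 3"
proof (induction j arbitrary: x)
  case 0 then show ?case by simp
next
  case (Suc j)
  have "exp ((exp ^^ j) 3) < x" using Suc.prems by simp
  moreover have "x > 0" using calculation by (meson exp_gt_zero less_trans)
  ultimately have "(exp ^^ j) 3 < ln x" by (metis exp_less_cancel_iff exp_ln)
  then show ?case using Suc.IH by (simp add: ilog_Suc' del: ilog.simps)
qed

lemma exp_ge_2x: "(x::real) \<ge> 0 \<Longrightarrow> 2 * x \<le> exp x"
proof -
  assume "x \<ge> 0"
  have "1 + x / 2 \<le> exp (x/2)" by (rule exp_ge_add_one_self)
  hence "(1 + x/2)^2 \<le> exp (x/2) ^ 2" using \<open>x\<ge>0\<close> by (intro power_mono) auto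
  also have "exp (x/2) ^ 2 = exp x" by (simp add: power2_eq_square flip: exp_add)
  finally have "(1 + x/2)^2 \<le> exp x" .
  moreover have "2 * x \<le> (1 + x/2)^2"
  proof -
    have "(1 + x/2)^2 - 2*x = (x/2 - 1)^2" by (simp add: power2_eq_square algebra_simps)
    moreover have "0 \<le> (x/2 - 1)^2" by simp
    ultimately show ?thesis by linarith
  qed
  ultimately show ?thesis by linarith
qed

lemma step:
  fixes y a a' K p :: real
  assumes y1: "exp (1/2) \<le> y" and y2: "y < sqrt (6 * (1 - p)) * a"
    and a': "a' = ln a" and a: "a > 0" and K: "2 \<le> K" "K < a'" and a'2: "a' > 2"
    and p: "0 < p" "p \<le> 1/2"
  shows "exp (1/2) \<le> sqrt (3 * K * ln y)"
    and "sqrt (3 * K * ln y) < sqrt (6 * (1 - p/2)) * a'"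
proof -
  have ypos: "y > 0" using y1 exp_gt_zero[of "1/2"] by linarith
  have lny: "1/2 \<le> ln y" using y1 ln_ge_iff[OF ypos] by blast
  have "3 \<le> 3 * K * ln y"
  proof -
    have "3 * 2 * (1/2) \<le> 3 * K * ln y" using K lny
      by (intro mult_mono) auto
    thus ?thesis by simp
  qed
  moreover have "exp (1/2::real) ^ 2 = exp 1" by (simp add: power2_eq_square flip: exp_add)
  ultimately have "exp (1/2) ^ 2 \<le> 3 * K * ln y" using exp_le by linarith
  hence "sqrt (exp (1/2) ^ 2) \<le> sqrt (3 * K * ln y)" by (rule real_sqrt_le_mono)
  thus "exp (1/2) \<le> sqrt (3 * K * ln y)" by simp
  define c where "c = sqrt (6 * (1 - p))"
  have cpos: "c > 0" using p by (simp add: c_def)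
  have c2: "c^2 < exp 1 ^ 2"
  proof -
    have "c^2 = 6 * (1 - p)" using p by (simp add: c_def)
    also have "\<dots> < 6" using p by simp
    also have "(6::real) < exp 1 ^ 2"
    proof -
      have h: "(5/2::real)^2 \<le> exp 1 ^ 2" by (rule power_mono[OF exp1_ge]) simp
      have "(5/2::real)^2 = 25/4" by (simp add: power2_eq_square)
      thus ?thesis using h by linarith
    qed
    finally show ?thesis .
  qed
  hence "c < exp 1" by (rule power_less_imp_less_base) simp
  hence lnc: "ln c < 1" using cpos by (metis exp_less_cancel_iff exp_ln)
  have "ln y < ln (c * a)" using ypos y2 cpos a by (simp add: c_def)
  also have "ln (c * a) = ln c + a'" using cpos a a' by (simp add: ln_mult)
  finally have lny2: "ln y < ln c + a'" .
  have "3 * K * ln y \<le> 3 * a' * ln y" using K lny by (intro mult_right_mono) auto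
  also have "\<dots> < 3 * a' * (ln c + a')" using lny2 a'2 by (intro mult_strict_left_mono) auto
  also have "\<dots> \<le> 3 * a' * (a' * (1 - p) + a')"
  proof -
    have "ln c \<le> a' * (1 - p)"
    proof -
      have "a' * (1/2) \<le> a' * (1 - p)" using p a'2 by (intro mult_left_mono) auto
      thus ?thesis using lnc a'2 by linarith
    qed
    thus ?thesis using a'2 by (intro mult_left_mono) auto
  qed
  also have "\<dots> = (sqrt (6 * (1 - p/2)) * a')^2"
    using p by (simp add: power_mult_distrib algebra_simps power2_eq_square)
  finally have "3 * K * ln y < (sqrt (6 * (1 - p/2)) * a')^2" .
  hence "sqrt (3 * K * ln y) < sqrt ((sqrt (6 * (1 - p/2)) * a')^2)" by (rule real_sqrt_less_mono)
  also have "\<dots> = sqrt (6 * (1 - p/2)) * a'" using a'2 p by simp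
  finally show "sqrt (3 * K * ln y) < sqrt (6 * (1 - p/2)) * a'" .
qed


lemma powi_eq: "(2::real) powi (- int i) = 1 / 2^i"
  by (simp add: power_int_minus divide_inverse)

lemma base_ineq:
  fixes t :: real assumes t: "16 \<le> t"
  shows "sqrt (3 * t) + 3 < sqrt 3 * t"
proof -
  define s where "s = sqrt t"
  have s4: "4 \<le> s" unfolding s_def using real_sqrt_le_mono[OF t] by simp
  have ts: "t = s * s" using t by (simp add: s_def)
  have e: "sqrt (3 * t) = sqrt 3 * s" by (simp add: s_def real_sqrt_mult)
  have "4 * s \<le> s * s" using s4 by (intro mult_right_mono) auto
  hence "12 \<le> s * s - s" using s4 by linarith
  moreover have "1 \<le> sqrt (3::real)" by simp
  ultimately have "1 * 12 \<le> sqrt 3 * (s * s - s)" by (intro mult_mono) auto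
  hence "12 \<le> sqrt 3 * (s * s - s)" by simp
  thus ?thesis using e ts by (simp add: algebra_simps)
qed

lemma tower_mono: "j \<le> c \<Longrightarrow> (exp ^^ j) (3::real) \<le> (exp ^^ c) 3"
proof (induction c)
  case 0 then show ?case by simp
next
  case (Suc c)
  show ?case
  proof (cases "j = Suc c")
    case True then show ?thesis by simp
  next
    case False
    hence "(exp ^^ j) (3::real) \<le> (exp ^^ c) 3" using Suc by simp
    also have "\<dots> \<le> exp ((exp ^^ c) 3)" using exp_ge_add_one_self[of "(exp ^^ c) 3"] by linarith
    finally show ?thesis by simp
  qed
qed

lemma key:
  fixes n :: nat
  assumes big: "16 \<le> ln (real n)" and pos: "\<forall>j\<le>ell n. 2 < ilog j (real n)"
  shows "(\<forall>i\<in>{1..ell n - 1}. (2::real) ^ (ell n - i) < ilog (i + 1) (real n)) \<and>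
           (\<forall>i\<in>{1..ell n}. nseq n i < sqrt (6 * (1 - 2 powi (- int i))) * ilog i (real n))"
proof -
  define L where "L = ell n"
  define a where "a = (\<lambda>j. ilog j (real n))"
  have pos': "\<And>j. j \<le> L \<Longrightarrow> 2 < a j" using pos by (simp add: a_def L_def)
  have A: "\<And>d. d \<le> L \<Longrightarrow> a (L - d) > 2^(d+1)"
  proof -
    fix d assume "d \<le> L" thus "a (L-d) > 2^(d+1)"
    proof (induction d)
      case 0 then show ?case using pos' by simp
    next
      case (Suc d)
      have eq: "L - d = Suc (L - Suc d)" using Suc.prems by simp
      have p: "a (L - Suc d) > 2" using pos' Suc.prems by simp
      have "a (L - d) = ln (a (L - Suc d))" by (simp add: eq a_def)
      hence e: "exp (a (L-d)) = a (L - Suc d)" using p by simp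
      have ih: "a (L-d) > 2^(d+1)" using Suc by simp
      have "0 \<le> (2::real)^(d+1)" by simp
      hence "2 * a (L-d) \<le> exp (a (L-d))" using ih by (intro exp_ge_2x) linarith
      thus ?case using e ih by simp
    qed
  qed
  have C1: "\<forall>i\<in>{1..L - 1}. (2::real) ^ (L - i) < a (i + 1)"
  proof
    fix i assume i: "i \<in> {1..L - 1}"
    have "a (L - (L - (i+1))) > 2^(L - (i+1) + 1)" using A[of "L - (i+1)"] by simp
    moreover have "L - (L - (i+1)) = i + 1" "L - (i+1) + 1 = L - i" using i by auto
    ultimately show "(2::real) ^ (L - i) < a (i + 1)" by metis
  qed
  have B: "\<And>i. 1 \<le> i \<Longrightarrow> i \<le> L \<Longrightarrow> exp (1/2) \<le> nseq n i \<and> nseq n i < sqrt (6 * (1 - 1 / 2^i)) * a i"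
  proof -
    fix i show "1 \<le> i \<Longrightarrow> i \<le> L \<Longrightarrow> exp (1/2) \<le> nseq n i \<and> nseq n i < sqrt (6 * (1 - 1 / 2^i)) * a i"
    proof (induction i)
      case 0 then show ?case by simp
    next
      case (Suc i)
      show ?case
      proof (cases i)
        case 0
        have "exp (1/2::real) \<le> exp 1" by simp
        moreover have "0 \<le> sqrt (3 * ln (real n))" using big by simp
        moreover have "nseq n (Suc 0) = sqrt (3 * ln (real n)) + 3" by simp
        ultimately have "exp (1/2) \<le> nseq n (Suc 0)" using exp_le by linarith
        moreover have "nseq n (Suc 0) < sqrt (6 * (1 - 1 / 2^1)) * a 1"
          using base_ineq[OF big] by (simp add: a_def)
        ultimately show ?thesis using 0 by simp
      next
        case (Suc i')
        have i1: "1 \<le> i" "i \<le> L" "i < L" using Suc \<open>Suc i \<le> L\<close> by auto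
        have ih: "exp (1/2) \<le> nseq n i" "nseq n i < sqrt (6 * (1 - 1 / 2^i)) * a i"
          using Suc.IH i1 by auto
        have ns: "nseq n (Suc i) = sqrt (3 * 2 ^ (L - i) * ln (nseq n i))"
          using Suc by (simp add: L_def)
        have K1: "(2::real) \<le> 2 ^ (L - i)"
        proof -
          have "(2::real)^1 \<le> 2 ^ (L - i)" using i1 by (intro power_increasing) auto
          thus ?thesis by simp
        qed
        have K2: "(2::real) ^ (L - i) < a (Suc i)" using C1 i1 by auto
        have aS: "a (Suc i) = ln (a i)" by (simp add: a_def)
        have p2: "(1::real) / 2^i \<le> 1/2"
        proof -
          have "(2::real)^1 \<le> 2^i" using i1 by (intro power_increasing) auto
          thus ?thesis by (simp add: field_simps)
        qed
        have st: "exp (1/2) \<le> sqrt (3 * 2 ^ (L - i) * ln (nseq n i))"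
             "sqrt (3 * 2 ^ (L - i) * ln (nseq n i)) < sqrt (6 * (1 - (1 / 2^i)/2)) * a (Suc i)"
          using step[OF ih aS _ K1 K2] pos'[of i] pos'[of "Suc i"] i1 p2 by auto
        have "(1::real) / 2^i / 2 = 1 / 2^(Suc i)" by simp
        thus ?thesis using st ns by simp
      qed
    qed
  qed
  show ?thesis
    using C1 B by (auto simp: powi_eq L_def a_def)
qed


lemma pos_normal:
  fixes n :: nat
  assumes n2: "2 < real n" and ex: "\<exists>k. ilog k (real n) < 0"
  shows "\<forall>j\<le>ell n. 2 < ilog j (real n)"
proof -
  define a where "a = (\<lambda>j. ilog j (real n))"
  define m where "m = (LEAST k. ilog k (real n) < 0)"
  have am: "a m < 0" using LeastI_ex[OF ex] by (simp add: a_def m_def)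
  have nn: "\<And>j. j < m \<Longrightarrow> 0 \<le> a j" using not_less_Least by (force simp: a_def m_def)
  have ell: "ell n = m - 3" by (simp add: ell_def m_def)
  have aS: "\<And>j. a (Suc j) = ln (a j)" by (simp add: a_def)
  show ?thesis
  proof (cases "m < 3")
    case True
    then show ?thesis using n2 by (simp add: ell)
  next
    case False
    define L where "L = m - 3"
    have m3: "m = Suc (Suc (Suc L))" using False by (simp add: L_def)
    have h1: "0 \<le> a (Suc (Suc L))" using nn m3 by simp
    have h2: "ln (a (Suc (Suc L))) < 0" using am m3 aS by simp
    have "a (Suc (Suc L)) \<noteq> 0" using h2 by auto
    hence p1: "0 < a (Suc (Suc L))" using h1 by simp
    hence "0 < ln (a (Suc L))" using aS by simp
    moreover have "a (Suc L) \<noteq> 0" using calculation by auto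
    moreover have "0 \<le> a (Suc L)" using nn m3 by simp
    ultimately have p2: "1 < a (Suc L)" by simp
    hence "1 < ln (a L)" using aS by simp
    moreover have "a L \<noteq> 0" using calculation by auto
    moreover have "0 \<le> a L" using nn m3 by simp
    ultimately have aLp: "0 < a L" and l1: "1 < ln (a L)" by auto
    hence "exp 1 < a L" by (metis exp_less_cancel_iff exp_ln)
    hence aL: "2 < a L" using exp1_ge by simp
    have D: "\<And>d. d \<le> L \<Longrightarrow> 2 < a (L - d)"
    proof -
      fix d show "d \<le> L \<Longrightarrow> 2 < a (L - d)"
      proof (induction d)
        case 0 then show ?case using aL by simp
      next
        case (Suc d)
        have eq: "L - d = Suc (L - Suc d)" using Suc.prems by simp
        have ih: "2 < a (L - d)" using Suc by simp
        hence l: "2 < ln (a (L - Suc d))" using aS eq by metis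
        hence "a (L - Suc d) \<noteq> 0" by auto
        moreover have "0 \<le> a (L - Suc d)" using nn m3 by simp
        ultimately have "0 < a (L - Suc d)" by simp
        hence "exp (ln (a (L - Suc d))) = a (L - Suc d)" by simp
        moreover have "ln (a (L - Suc d)) < exp (ln (a (L - Suc d)))"
          using exp_ge_add_one_self[of "ln (a (L - Suc d))"] by linarith
        ultimately show ?case using l by linarith
      qed
    qed
    show ?thesis
    proof (intro allI impI)
      fix j assume "j \<le> ell n"
      hence "j \<le> L" using ell L_def by simp
      hence "2 < a (L - (L - j))" using D[of "L - j"] by simp
      thus "2 < ilog j (real n)" using \<open>j \<le> L\<close> by (simp add: a_def)
    qed
  qed
qed

theorem mainTheorem6:
  shows "\<forall>\<^sub>F n in sequentially.
           (\<forall>i\<in>{1..ell n - 1}. (2::real) ^ (ell n - i) < ilog (i + 1) (real n)) \<and>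
           (\<forall>i\<in>{1..ell n}. nseq n i < sqrt (6 * (1 - 2 powi (- int i))) * ilog i (real n))"
proof -
  define c where "c = (LEAST k::nat. False)"
  define M where "M = max (exp 16) ((exp ^^ c) (3::real))"
  have ev: "\<forall>\<^sub>F n in sequentially. nat \<lceil>M\<rceil> + 1 \<le> n" by (rule eventually_ge_at_top)
  show ?thesis
  proof (rule eventually_mono[OF ev])
    fix n :: nat assume "nat \<lceil>M\<rceil> + 1 \<le> n"
    hence nM: "M < real n" by linarith
    have e16: "exp 16 < real n" using nM by (simp add: M_def)
    have big: "16 \<le> ln (real n)"
    proof -
      have "0 < real n" using e16 exp_gt_zero[of 16] by linarith
      thus ?thesis using e16 ln_ge_iff[of "real n" 16] by linarith
    qed
    have n2: "2 < real n"
    proof -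
      have "1 + 16 \<le> exp (16::real)" by (rule exp_ge_add_one_self)
      thus ?thesis using e16 by linarith
    qed
    have pos: "\<forall>j\<le>ell n. 2 < ilog j (real n)"
    proof (cases "\<exists>k. ilog k (real n) < 0")
      case True
      then show ?thesis using pos_normal n2 by blast
    next
      case False
      hence "(\<lambda>k. ilog k (real n) < 0) = (\<lambda>k. False)" by auto
      hence ell: "ell n = c - 3" by (simp add: ell_def c_def)
      show ?thesis
      proof (intro allI impI)
        fix j assume "j \<le> ell n"
        hence "j \<le> c" using ell by simp
        hence "(exp ^^ j) (3::real) \<le> (exp ^^ c) 3" by (rule tower_mono)
        hence "(exp ^^ j) 3 < real n" using nM by (simp add: M_def)
        hence "3 < ilog j (real n)" by (rule ilog_tower)
        thus "2 < ilog j (real n)" by simp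
      qed
    qed
    show "(\<forall>i\<in>{1..ell n - 1}. (2::real) ^ (ell n - i) < ilog (i + 1) (real n)) \<and>
           (\<forall>i\<in>{1..ell n}. nseq n i < sqrt (6 * (1 - 2 powi (- int i))) * ilog i (real n))"
      by (rule key[OF big pos])
  qed
qed

end
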